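(* Let $I$ be an index set and $P_r,Q_r\in GL(n,\mathbb C)$ for $r\in I$. There exists a ($C^1$-)diffeomorphism $f\colon\mathbb C^n\to\mathbb C^n$ (of the underlying real space $\mathbb R^{2n}$) with $f(P_rw)=Q_rf(w)$ for all $w\in\mathbb C^n$, $r\in I$, if and only if there exists an invertible $\mathbb R$-linear map $L\colon\mathbb C^n\to\mathbb C^n$, $L(w)=Mw+N\overline w$ with $M,N$ complex $n\times n$ matrices, such that $L(P_rw)=Q_rL(w)$ for all $w\in\mathbb C^n$, $r\in I$. *)

theory Defs
  imports "HOL-Analysis.Analysis"
begin

definition vec_cnj :: "complex ^ 'n \<Rightarrow> complex ^ 'n" where
  "vec_cnj w = (\<chi> i. cnj (w $ i))"

definition C1_diffeo :: "('a::real_normed_vector \<Rightarrow> 'a) \<Rightarrow> bool" where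
  "C1_diffeo f \<longleftrightarrow> bij f
     \<and> (\<exists>f'. (\<forall>x. (f has_derivative blinfun_apply (f' x)) (at x)) \<and> continuous_on UNIV f')
     \<and> (\<exists>g'. (\<forall>y. (inv f has_derivative blinfun_apply (g' y)) (at y)) \<and> continuous_on UNIV g')"

end

theory Submission imports Defs begin

lemma aux2: fixes a b :: complex and x y :: real
  shows "(a - \<i>*b)/2 * (of_real x + \<i> * of_real y) + (a + \<i>*b)/2 * (of_real x - \<i> * of_real y) = x *\<^sub>R a + y *\<^sub>R b"
  by (simp add: scaleR_conv_of_real field_simps)

lemma aux: fixes a b z :: complex
  shows "(a - \<i>*b)/2 * z + (a + \<i>*b)/2 * cnj z = Re z *\<^sub>R a + Im z *\<^sub>R b"
proof -
  have e: "of_real (Re z) + \<i> * of_real (Im z) = z" "of_real (Re z) - \<i> * of_real (Im z) = cnj z"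
    by (simp_all add: complex_eq_iff)
  show ?thesis using aux2[of a b "Re z" "Im z"] by (simp only: e)
qed


lemma vec_decomp:
  fixes w :: "complex ^ 'n"
  shows "w = (\<Sum>j\<in>UNIV. Re (w$j) *\<^sub>R axis j 1 + Im (w$j) *\<^sub>R axis j \<i>)"
proof -
  have "w $ i = (\<Sum>j\<in>UNIV. Re (w$j) *\<^sub>R axis j 1 + Im (w$j) *\<^sub>R axis j \<i>) $ i" for i
  proof -
    have "(\<Sum>j\<in>UNIV. Re (w$j) *\<^sub>R axis j 1 + Im (w$j) *\<^sub>R axis j \<i>) $ i
       = (\<Sum>j\<in>UNIV. if j = i then w$i else 0)"
      unfolding sum_component
    proof (rule sum.cong[OF refl])
      fix j show "(Re (w$j) *\<^sub>R axis j 1 + Im (w$j) *\<^sub>R axis j \<i>) $ i = (if j = i then w$i else 0)"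
        by (cases "j = i") (auto simp: axis_def complex_eq_iff)
    qed
    also have "\<dots> = w $ i" by simp
    finally show ?thesis by simp
  qed
  then show ?thesis using vec_eq_iff by blast
qed

lemma real_linear_repr:
  fixes L :: "complex ^ 'n \<Rightarrow> complex ^ 'm"
  assumes "linear L"
  shows "\<exists>M N :: complex ^ 'n ^ 'm. \<forall>w. L w = M *v w + N *v vec_cnj w"
proof -
  define M :: "complex ^ 'n ^ 'm" where "M = (\<chi> i j. (L (axis j 1) $ i - \<i> * L (axis j \<i>) $ i) / 2)"
  define N :: "complex ^ 'n ^ 'm" where "N = (\<chi> i j. (L (axis j 1) $ i + \<i> * L (axis j \<i>) $ i) / 2)"
  have "L w = M *v w + N *v vec_cnj w" for w
  proof -
    have "L w = (\<Sum>j\<in>UNIV. Re (w$j) *\<^sub>R L (axis j 1) + Im (w$j) *\<^sub>R L (axis j \<i>))"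
      apply (subst vec_decomp[of w])
      by (simp add: linear_sum[OF assms] linear_add[OF assms] linear_scale[OF assms])
    moreover have "(M *v w + N *v vec_cnj w) $ i = (\<Sum>j\<in>UNIV. Re (w$j) *\<^sub>R L (axis j 1) + Im (w$j) *\<^sub>R L (axis j \<i>)) $ i" for i
    proof -
      have "(M *v w + N *v vec_cnj w) $ i = (\<Sum>j\<in>UNIV. M$i$j * w$j + N$i$j * cnj (w$j))"
        by (simp add: matrix_vector_mult_def vec_cnj_def sum.distrib)
      also have "\<dots> = (\<Sum>j\<in>UNIV. Re (w$j) *\<^sub>R L (axis j 1) $ i + Im (w$j) *\<^sub>R L (axis j \<i>) $ i)"
      proof (rule sum.cong[OF refl])
        fix j
        show "M$i$j * w$j + N$i$j * cnj (w$j) = Re (w$j) *\<^sub>R L (axis j 1) $ i + Im (w$j) *\<^sub>R L (axis j \<i>) $ i"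
          unfolding M_def N_def using aux[of "L (axis j 1) $ i" "L (axis j \<i>) $ i" "w$j"]
          by (simp add: algebra_simps)
      qed
      also have "\<dots> = (\<Sum>j\<in>UNIV. Re (w$j) *\<^sub>R L (axis j 1) + Im (w$j) *\<^sub>R L (axis j \<i>)) $ i"
        by (simp add: sum_component)
      finally show ?thesis .
    qed
    ultimately show ?thesis by (simp add: vec_eq_iff)
  qed
  then show ?thesis by blast
qed

lemma linear_ML:
  fixes M N :: "complex ^ 'n ^ 'm"
  shows "linear (\<lambda>w. M *v w + N *v vec_cnj w)"
proof -
  have c1: "vec_cnj (x + y) = vec_cnj x + vec_cnj y" for x y :: "complex ^ 'n"
    by (simp add: vec_cnj_def vec_eq_iff)
  have c2: "vec_cnj (c *\<^sub>R x) = c *\<^sub>R vec_cnj x" for c and x :: "complex ^ 'n"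
    by (simp add: vec_cnj_def vec_eq_iff complex_cnj_scaleR)
  show ?thesis
    by (rule linearI) (simp_all add: c1 c2 matrix_vector_right_distrib linear_scale[OF matrix_vector_mul_linear] algebra_simps)
qed

lemma linear_inv_bij:
  fixes L :: "'a::real_vector \<Rightarrow> 'b::real_vector"
  assumes "linear L" "bij L"
  shows "linear (inv L)"
proof (rule linearI)
  fix x y
  have "L (inv L x + inv L y) = x + y"
    using assms by (simp add: linear_add bij_inv_eq_iff[symmetric] bij_is_surj surj_f_inv_f)
  then show "inv L (x + y) = inv L x + inv L y" using assms by (metis bij_inv_eq_iff)
next
  fix c x
  have "L (c *\<^sub>R inv L x) = c *\<^sub>R x"
    using assms by (simp add: linear_scale bij_is_surj surj_f_inv_f)
  then show "inv L (c *\<^sub>R x) = c *\<^sub>R inv L x" using assms by (metis bij_inv_eq_iff)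
qed

theorem theorem3p4:
  fixes I :: "'i set"
    and P Q :: "'i \<Rightarrow> complex ^ 'n ^ 'n"
  assumes "\<forall>r\<in>I. invertible (P r) \<and> invertible (Q r)"
  shows "(\<exists>f :: complex ^ 'n \<Rightarrow> complex ^ 'n. C1_diffeo f \<and>
            (\<forall>r\<in>I. \<forall>w. f (P r *v w) = Q r *v f w))
     \<longleftrightarrow> (\<exists>M N :: complex ^ 'n ^ 'n.
            bij (\<lambda>w. M *v w + N *v vec_cnj w) \<and>
            (\<forall>r\<in>I. \<forall>w. M *v (P r *v w) + N *v vec_cnj (P r *v w)
                        = Q r *v (M *v w + N *v vec_cnj w)))"
proof
  assume "\<exists>f :: complex ^ 'n \<Rightarrow> complex ^ 'n. C1_diffeo f \<and>
            (\<forall>r\<in>I. \<forall>w. f (P r *v w) = Q r *v f w)"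
  then obtain f :: "complex ^ 'n \<Rightarrow> complex ^ 'n" where df: "C1_diffeo f"
    and eq: "\<forall>r\<in>I. \<forall>w. f (P r *v w) = Q r *v f w" by blast
  from df obtain f' g' where bf: "bij f"
    and fd: "\<And>x. (f has_derivative blinfun_apply (f' x)) (at x)"
    and gd: "\<And>y. (inv f has_derivative blinfun_apply (g' y)) (at y)"
    unfolding C1_diffeo_def by blast
  define L where "L = blinfun_apply (f' 0)"
  have Ll: "linear L" unfolding L_def by (simp add: blinfun.bounded_linear_right bounded_linear.linear)
  have fd0: "(f has_derivative L) (at 0)" using fd[of 0] by (simp add: L_def)
  define G where "G = blinfun_apply (g' (f 0))"
  have gd0: "(inv f has_derivative G) (at (f 0))" using gd unfolding G_def by blast
  have "((inv f \<circ> f) has_derivative (G \<circ> L)) (at 0)"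
    using diff_chain_at[OF fd0 gd0] .
  moreover have "inv f \<circ> f = id" using bf by (simp add: bij_is_inj)
  ultimately have "(G \<circ> L) = id" using has_derivative_unique has_derivative_id
    by (metis id_def)
  then have injL: "inj L" by (metis inj_on_id inj_on_imageI2)
  have i0: "inv f (f 0) = 0" using bf by (simp add: bij_is_inj)
  have fdi: "(f has_derivative L) (at (inv f (f 0)))" using fd0 i0 by simp
  have "((f \<circ> inv f) has_derivative (L \<circ> G)) (at (f 0))"
    using diff_chain_at[OF gd0 fdi] .
  moreover have "f \<circ> inv f = id" using bf by (simp add: bij_is_surj surj_f_inv_f fun_eq_iff)
  ultimately have "(L \<circ> G) = id" using has_derivative_unique has_derivative_id
    by (metis id_def)
  then have surjL: "surj L" by (intro surjI[of L G]) (metis comp_apply id_apply)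
  have equiv: "L (P r *v w) = Q r *v L w" if r: "r \<in> I" for r w
  proof -
    have bP: "bounded_linear ((*v) (P r))" by simp
    have bQ: "bounded_linear ((*v) (Q r))" by simp
    have fdP: "(f has_derivative L) (at (P r *v 0))" using fd0 by simp
    have d1: "((f \<circ> (*v) (P r)) has_derivative (L \<circ> (*v) (P r))) (at 0)"
      using diff_chain_at[OF bounded_linear_imp_has_derivative[OF bP] fdP] .
    have d2: "(((*v) (Q r) \<circ> f) has_derivative ((*v) (Q r) \<circ> L)) (at 0)"
      using diff_chain_at[OF fd0 bounded_linear_imp_has_derivative[OF bQ]] .
    have "f \<circ> (*v) (P r) = (*v) (Q r) \<circ> f" using eq r by (auto simp: fun_eq_iff)
    then have "L \<circ> (*v) (P r) = (*v) (Q r) \<circ> L" using d1 d2 has_derivative_unique by metis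
    then show ?thesis by (metis comp_apply)
  qed
  obtain M N :: "complex ^ 'n ^ 'n" where MN: "\<And>w. L w = M *v w + N *v vec_cnj w"
    using real_linear_repr[OF Ll] by blast
  have LMN: "L = (\<lambda>w. M *v w + N *v vec_cnj w)" using MN by auto
  have "bij L" using injL surjL by (simp add: bij_def)
  then show "\<exists>M N :: complex ^ 'n ^ 'n.
            bij (\<lambda>w. M *v w + N *v vec_cnj w) \<and>
            (\<forall>r\<in>I. \<forall>w. M *v (P r *v w) + N *v vec_cnj (P r *v w)
                        = Q r *v (M *v w + N *v vec_cnj w))"
    using equiv unfolding LMN by blast
next
  assume "\<exists>M N :: complex ^ 'n ^ 'n.
            bij (\<lambda>w. M *v w + N *v vec_cnj w) \<and>
            (\<forall>r\<in>I. \<forall>w. M *v (P r *v w) + N *v vec_cnj (P r *v w)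
                        = Q r *v (M *v w + N *v vec_cnj w))"
  then obtain M N :: "complex ^ 'n ^ 'n" where b: "bij (\<lambda>w. M *v w + N *v vec_cnj w)"
    and e: "\<forall>r\<in>I. \<forall>w. M *v (P r *v w) + N *v vec_cnj (P r *v w)
                        = Q r *v (M *v w + N *v vec_cnj w)" by blast
  define L where "L = (\<lambda>w. M *v w + N *v vec_cnj w)"
  have bl: "bounded_linear L" unfolding L_def using linear_ML linear_conv_bounded_linear by blast
  have bli: "bounded_linear (inv L)"
    using linear_inv_bij[OF linear_ML b] linear_conv_bounded_linear unfolding L_def by blast
  have "C1_diffeo L"
    unfolding C1_diffeo_def
  proof (intro conjI)
    show "bij L" using b by (simp add: L_def)
    show "\<exists>f'. (\<forall>x. (L has_derivative blinfun_apply (f' x)) (at x)) \<and> continuous_on UNIV f'"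
      by (rule exI[of _ "\<lambda>_. Blinfun L"])
         (simp add: bounded_linear_Blinfun_apply[OF bl] bounded_linear_imp_has_derivative[OF bl])
    show "\<exists>g'. (\<forall>y. (inv L has_derivative blinfun_apply (g' y)) (at y)) \<and> continuous_on UNIV g'"
      by (rule exI[of _ "\<lambda>_. Blinfun (inv L)"])
         (simp add: bounded_linear_Blinfun_apply[OF bli] bounded_linear_imp_has_derivative[OF bli])
  qed
  then show "\<exists>f :: complex ^ 'n \<Rightarrow> complex ^ 'n. C1_diffeo f \<and>
            (\<forall>r\<in>I. \<forall>w. f (P r *v w) = Q r *v f w)"
    using e unfolding L_def by blast
qed

end
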